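(* Let $n=2^m$, and let $\mathbf{G}_n^{\mathrm{ABS+}}$ be an ABS+ encoding matrix of size $n$, specified by the sets $\mathcal{I}_S^{(N)},\mathcal{I}_A^{(N)}$ for $N=2,4,\dots,n$. Then for any $u\in\{0,1\}^n$, the codeword $u\,\mathbf{G}_n^{\mathrm{ABS+}}$ can be computed (layer by layer, applying for $N=n,n/2,\dots,2$ the transforms of $\mathbf{Q}_N$ and then the $2\times 2$ polar transforms to the appropriate strided subvectors) using $O(n\log n)$ elementary bit operations.
   Context: $\mathbf{G}_2^{\mathrm{polar}}=\begin{bmatrix}1&0\\1&1\end{bmatrix}$, $\otimes$ is the Kronecker product, arithmetic over $\mathbb{F}_2$. For $1\le i\le N-1$, $\mathbf{S}_N^{(i)}$ (resp. $\mathbf{A}_N^{(i)}$) is the $N\times N$ binary matrix such that $u\mapsto u\mathbf{S}_N^{(i)}$ (resp. $u\mapsto u\mathbf{A}_N^{(i)}$) fixes all coordinates other than $u_i,u_{i+1}$ and maps $(u_i,u_{i+1})$ to $(u_{i+1},u_i)$ (resp. to $(u_i+u_{i+1},u_{i+1})$). ABS+ encoding matrices: $\mathbf{G}_2^{\mathrm{ABS+}}=\mathbf{Q}_2\mathbf{G}_2^{\mathrm{polar}}$ with $\mathbf{Q}_2=\mathbf{I}_2$, and for $N=4,8,\dots$, $\mathbf{G}_N^{\mathrm{ABS+}}=\mathbf{Q}_N(\mathbf{G}_{N/2}^{\mathrm{ABS+}}\otimes\mathbf{G}_2^{\mathrm{polar}})$ where $\mathbf{Q}_N=\big(\prod_{i\in\mathcal{I}_S^{(N)}}\mathbf{S}_N^{(i)}\big)\big(\prod_{i\in\mathcal{I}_A^{(N)}}\mathbf{A}_N^{(i)}\big)$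 for disjoint sets $\mathcal{I}_S^{(N)},\mathcal{I}_A^{(N)}\subseteq\{1,\dots,N-1\}$ of even integers whose union $\{i_1<\dots<i_t\}$ satisfies $i_{s+1}\ge i_s+4$. *)

theory Defs
  imports Main "HOL-Library.Z2"
begin

text \<open>Binary matrices over F2 (type bit), 0-based indices; an N x N matrix is a
function nat => nat => bit of which only entries with indices < N are used.
Row vectors are functions nat => bit (only coordinates < N are used).\<close>

type_synonym bmat = "nat \<Rightarrow> nat \<Rightarrow> bit"
type_synonym bvec = "nat \<Rightarrow> bit"

definition vecmat :: "nat \<Rightarrow> bvec \<Rightarrow> bmat \<Rightarrow> bvec" where
  "vecmat N u M = (\<lambda>j. \<Sum>i<N. u i * M i j)"

definition matmul :: "nat \<Rightarrow> bmat \<Rightarrow> bmat \<Rightarrow> bmat" where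
  "matmul N A B = (\<lambda>i k. \<Sum>j<N. A i j * B j k)"

definition idmat :: bmat where
  "idmat = (\<lambda>i j. if i = j then 1 else 0)"

definition polar2 :: bmat where
  "polar2 = (\<lambda>i j. if i < 2 \<and> j < 2 \<and> (i = 1 \<or> j = 0) then 1 else 0)"

text \<open>Kronecker product A \<otimes> G_2^polar for a square A: entry (2a+b, 2c+d) is A a c * polar2 b d.\<close>
definition kron2 :: "bmat \<Rightarrow> bmat" where
  "kron2 A = (\<lambda>p q. A (p div 2) (q div 2) * polar2 (p mod 2) (q mod 2))"

text \<open>S_N^(i), A_N^(i) for 1 \<le> i \<le> N-1, with the paper's 1-based coordinates
u_1..u_N: coordinate u_k is stored at 0-based index k-1, so u_i, u_{i+1} are at
indices i-1, i.  The map u \<mapsto> u S swaps them; u \<mapsto> u A sends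
(u_i, u_{i+1}) to (u_i + u_{i+1}, u_{i+1}).\<close>
definition Smat :: "nat \<Rightarrow> nat \<Rightarrow> bmat" where
  "Smat N i = (\<lambda>r c. if r < N \<and> c < N then
       (if r = i - 1 then (if c = i then 1 else 0)
        else if r = i then (if c = i - 1 then 1 else 0)
        else (if r = c then 1 else 0)) else 0)"

definition Amat :: "nat \<Rightarrow> nat \<Rightarrow> bmat" where
  "Amat N i = (\<lambda>r c. if r < N \<and> c < N then
       (if r = i \<and> c = i - 1 then 1 else if r = c then 1 else 0) else 0)"

text \<open>Product of a finite family of N x N matrices, taken in increasing order of the index.\<close>
definition matprod :: "nat \<Rightarrow> (nat \<Rightarrow> bmat) \<Rightarrow> nat set \<Rightarrow> bmat" where
  "matprod N F I = foldl (\<lambda>M i. matmul N M (F i)) idmat (sorted_list_of_set I)"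

definition Qmat :: "nat \<Rightarrow> nat set \<Rightarrow> nat set \<Rightarrow> bmat" where
  "Qmat N IS IA = matmul N (matprod N (Smat N) IS) (matprod N (Amat N) IA)"

definition valid_sets :: "nat \<Rightarrow> nat set \<Rightarrow> nat set \<Rightarrow> bool" where
  "valid_sets N IS IA \<longleftrightarrow>
     IS \<subseteq> {1..N-1} \<and> IA \<subseteq> {1..N-1} \<and> IS \<inter> IA = {} \<and>
     (\<forall>i \<in> IS \<union> IA. even i) \<and>
     (\<forall>a \<in> IS \<union> IA. \<forall>b \<in> IS \<union> IA. a < b \<longrightarrow> a + 4 \<le> b)"

text \<open>ABS+ encoding matrix of size 2^k, with the sets given as functions of N.
absG IS IA 0 is the 1x1 identity; absG IS IA 1 = Q_2 G_2^polar with Q_2 = I_2;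
absG IS IA (k+1) = Q_N (absG IS IA k \<otimes> G_2^polar) with N = 2^(k+1).\<close>
fun absG :: "(nat \<Rightarrow> nat set) \<Rightarrow> (nat \<Rightarrow> nat set) \<Rightarrow> nat \<Rightarrow> bmat" where
  "absG IS IA 0 = idmat"
| "absG IS IA (Suc k) =
     (if k = 0 then matmul 2 idmat (kron2 idmat)
      else matmul (2^Suc k) (Qmat (2^Suc k) (IS (2^Suc k)) (IA (2^Suc k)))
                  (kron2 (absG IS IA k)))"

text \<open>Cost model: straight-line programs of elementary in-place bit operations.
Xor i j: x_i := x_i + x_j; Swap i j: exchange x_i and x_j.\<close>
datatype bitop = Xor nat nat | Swap nat nat

fun exec_op :: "bitop \<Rightarrow> bvec \<Rightarrow> bvec" where
  "exec_op (Xor i j) x = x(i := x i + x j)"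
| "exec_op (Swap i j) x = x(i := x j, j := x i)"

definition exec :: "bitop list \<Rightarrow> bvec \<Rightarrow> bvec" where
  "exec prog x = foldl (\<lambda>y op. exec_op op y) x prog"

fun op_indices :: "bitop \<Rightarrow> nat set" where
  "op_indices (Xor i j) = {i, j}"
| "op_indices (Swap i j) = {i, j}"

end

theory Submission
  imports Defs
begin

declare add_bit_eq_xor[simp del] mult_bit_eq_and[simp del]

definition computes :: "nat \<Rightarrow> bitop list \<Rightarrow> bmat \<Rightarrow> bool" where
  "computes N p M \<longleftrightarrow> (\<forall>u j. j < N \<longrightarrow> exec p u j = vecmat N u M j)"

definition inb :: "nat \<Rightarrow> bitop list \<Rightarrow> bool" where
  "inb N p \<longleftrightarrow> (\<forall>op \<in> set p. op_indices op \<subseteq> {..<N})"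

lemma exec_append: "exec (p @ q) x = exec q (exec p x)"
  by (simp add: exec_def)

lemma exec_Cons: "exec (o1 # p) x = exec p (exec_op o1 x)"
  by (simp add: exec_def)

lemma exec_Nil: "exec [] x = x"
  by (simp add: exec_def)

lemma vecmat_cong: "(\<And>i. i < N \<Longrightarrow> u i = v i) \<Longrightarrow> vecmat N u M = vecmat N v M"
  unfolding vecmat_def by (auto intro!: ext sum.cong)

lemma vecmat_matmul: "vecmat N u (matmul N A B) = vecmat N (vecmat N u A) B"
proof (rule ext)
  fix j
  have "vecmat N u (matmul N A B) j = (\<Sum>i<N. \<Sum>l<N. u i * (A i l * B l j))"
    unfolding vecmat_def matmul_def by (simp only: sum_distrib_left)
  also have "\<dots> = (\<Sum>l<N. \<Sum>i<N. u i * (A i l * B l j))" by (rule sum.swap)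
  also have "\<dots> = vecmat N (vecmat N u A) B j"
    unfolding vecmat_def by (simp only: sum_distrib_right mult.assoc)
  finally show "vecmat N u (matmul N A B) j = vecmat N (vecmat N u A) B j" .
qed

lemma compose:
  assumes "computes N p A" "computes N q B"
  shows "computes N (p @ q) (matmul N A B)"
  unfolding computes_def
proof (intro allI impI)
  fix u j assume j: "j < N"
  have "exec (p @ q) u j = vecmat N (exec p u) B j" using assms(2) j
    by (simp add: exec_append computes_def)
  also have "vecmat N (exec p u) B = vecmat N (vecmat N u A) B"
    using assms(1) by (intro vecmat_cong) (simp add: computes_def)
  finally show "exec (p @ q) u j = vecmat N u (matmul N A B) j"
    by (simp only: vecmat_matmul)
qed

lemma computes_id: "computes N [] idmat"
  unfolding computes_def
proof (intro allI impI)
  fix u and j :: nat assume j: "j < N"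
  have "vecmat N u idmat j = (\<Sum>i<N. if i = j then u i else 0)"
    unfolding vecmat_def idmat_def by (intro sum.cong) auto
  also have "\<dots> = u j" using j by simp
  finally show "exec [] u j = vecmat N u idmat j" by (simp add: exec_Nil)
qed

lemma computes_foldl:
  assumes "computes N p M0" "\<forall>i\<in>set xs. computes N [g i] (F i)"
  shows "computes N (p @ map g xs) (foldl (\<lambda>M i. matmul N M (F i)) M0 xs)"
  using assms
proof (induction xs arbitrary: p M0)
  case Nil then show ?case by simp
next
  case (Cons x xs)
  have "computes N (p @ [g x]) (matmul N M0 (F x))"
    using Cons.prems by (intro compose) auto
  then have "computes N ((p @ [g x]) @ map g xs) (foldl (\<lambda>M i. matmul N M (F i)) (matmul N M0 (F x)) xs)"
    using Cons.prems by (intro Cons.IH) auto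
  then show ?case by simp
qed

lemma computes_matprod:
  assumes "\<forall>i\<in>I. computes N [g i] (F i)" "finite I"
  shows "computes N (map g (sorted_list_of_set I)) (matprod N F I)"
  unfolding matprod_def
  using computes_foldl[OF computes_id, of "sorted_list_of_set I" N g F] assms by simp

lemma computes_S:
  assumes "1 \<le> i" "i < N"
  shows "computes N [Swap (i-1) i] (Smat N i)"
  unfolding computes_def
proof (intro allI impI)
  fix u j assume j: "j < N"
  define g where "g = (if j = i then i - 1 else if j = i - 1 then i else j)"
  have g: "g < N" using assms j by (auto simp: g_def)
  have "\<And>r. r < N \<Longrightarrow> Smat N i r j = (if r = g then 1 else 0)"
    using assms j by (auto simp: Smat_def g_def)
  then have "vecmat N u (Smat N i) j = (\<Sum>r<N. if r = g then u r else 0)"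
    unfolding vecmat_def by (intro sum.cong) auto
  also have "\<dots> = u g" using g by simp
  finally show "exec [Swap (i - 1) i] u j = vecmat N u (Smat N i) j"
    using assms by (auto simp: exec_def g_def)
qed

lemma computes_A:
  assumes "1 \<le> i" "i < N"
  shows "computes N [Xor (i-1) i] (Amat N i)"
  unfolding computes_def
proof (intro allI impI)
  fix u j assume j: "j < N"
  have "\<And>r. r < N \<Longrightarrow> Amat N i r j = (if r = j then 1 else 0) + (if r = i \<and> j = i - 1 then 1 else 0)"
    using assms j by (auto simp: Amat_def)
  then have "vecmat N u (Amat N i) j = (\<Sum>r<N. (if r = j then u r else 0) + (if r = i \<and> j = i - 1 then u r else 0))"
    unfolding vecmat_def by (intro sum.cong) (auto simp: distrib_left)
  also have "\<dots> = u j + (if j = i - 1 then u i else 0)"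
    using assms j by (simp add: sum.distrib)
  finally show "exec [Xor (i - 1) i] u j = vecmat N u (Amat N i) j"
    using assms by (auto simp: exec_def)
qed


fun map_op :: "(nat \<Rightarrow> nat) \<Rightarrow> bitop \<Rightarrow> bitop" where
  "map_op f (Xor i j) = Xor (f i) (f j)"
| "map_op f (Swap i j) = Swap (f i) (f j)"

lemma exec_op_relabel:
  assumes "inj f"
  shows "exec_op (map_op f b) x \<circ> f = exec_op b (x \<circ> f)"
    and "k \<notin> range f \<Longrightarrow> exec_op (map_op f b) x k = x k"
  using assms by (cases b; auto simp: inj_eq fun_eq_iff)+

lemma exec_relabel:
  assumes "inj f"
  shows "exec (map (map_op f) p) x \<circ> f = exec p (x \<circ> f) \<and>
         (\<forall>k. k \<notin> range f \<longrightarrow> exec (map (map_op f) p) x k = x k)"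
proof (induction p arbitrary: x)
  case Nil then show ?case by (simp add: exec_Nil)
next
  case (Cons o1 p)
  show ?case
    using Cons.IH[of "exec_op (map_op f o1) x"] exec_op_relabel[OF assms, where b=o1 and x=x]
    by (simp add: exec_Cons comp_def)
qed

lemma exec_relabel1:
  assumes "inj f" shows "exec (map (map_op f) p) x (f i) = exec p (x \<circ> f) i"
  using exec_relabel[OF assms, of p x] by (metis comp_apply)

lemma exec_relabel2:
  assumes "inj f" "k \<notin> range f" shows "exec (map (map_op f) p) x k = x k"
  using exec_relabel[OF assms(1), of p x] assms(2) by blast

definition polar :: "nat \<Rightarrow> bitop list" where
  "polar M = map (\<lambda>a. Xor (2*a) (2*a+1)) [0..<M]"

lemma exec_polar:
  "exec (polar M) v k = (if k < 2*M \<and> even k then v k + v (k+1) else v k)"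
proof (induction M arbitrary: k)
  case 0 then show ?case by (simp add: polar_def exec_Nil)
next
  case (Suc M)
  have "polar (Suc M) = polar M @ [Xor (2*M) (2*M+1)]" by (simp add: polar_def)
  then have "exec (polar (Suc M)) v k = exec_op (Xor (2*M) (2*M+1)) (exec (polar M) v) k"
    by (simp add: exec_append exec_Cons exec_Nil)
  also have "\<dots> = (if k < 2*Suc M \<and> even k then v k + v (k+1) else v k)"
    using Suc.IH by auto
  finally show ?case .
qed

lemma sum_split2: "(\<Sum>p<2*(M::nat). g p) = (\<Sum>a<M. g (2*a) + g (2*a+1))"
  by (induction M) (simp_all add: add.assoc)

lemma kron_step:
  assumes "j < 2*M"
  shows "vecmat (2*M) v (kron2 G) j = vecmat M (\<lambda>a. exec (polar M) v (2*a + j mod 2)) G (j div 2)"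
proof -
  have "vecmat (2*M) v (kron2 G) j = (\<Sum>a<M. v (2*a) * kron2 G (2*a) j + v (2*a+1) * kron2 G (2*a+1) j)"
    unfolding vecmat_def by (rule sum_split2)
  also have "\<dots> = (\<Sum>a<M. exec (polar M) v (2*a + j mod 2) * G a (j div 2))"
  proof (intro sum.cong refl)
    fix a assume a: "a \<in> {..<M}"
    show "v (2*a) * kron2 G (2*a) j + v (2*a+1) * kron2 G (2*a+1) j = exec (polar M) v (2*a + j mod 2) * G a (j div 2)"
    proof (cases "even j")
      case True
      then have "j mod 2 = 0" by simp
      then show ?thesis using a
        by (simp add: kron2_def polar2_def exec_polar distrib_right)
    next
      case False
      then have "j mod 2 = 1" by presburger
      then show ?thesis using a
        by (simp add: kron2_def polar2_def exec_polar distrib_right)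
    qed
  qed
  finally show ?thesis unfolding vecmat_def .
qed


lemma inj_f0: "inj (\<lambda>a::nat. 2*a)" by (auto simp: inj_on_def)
lemma inj_f1: "inj (\<lambda>a::nat. 2*a+1)" by (auto simp: inj_on_def)

lemma kron_computes:
  assumes "computes M p G"
  shows "computes (2*M) (polar M @ map (map_op (\<lambda>a. 2*a+1)) p @ map (map_op (\<lambda>a. 2*a)) p) (kron2 G)"
  unfolding computes_def
proof (intro allI impI)
  fix u j assume j: "j < 2*M"
  define w where "w = exec (polar M) u"
  define y where "y = exec (map (map_op (\<lambda>a. 2*a+1)) p) w"
  have c: "j div 2 < M" using j by simp
  have lhs: "exec (polar M @ map (map_op (\<lambda>a. 2*a+1)) p @ map (map_op (\<lambda>a. 2*a)) p) u j
        = exec (map (map_op (\<lambda>a. 2*a)) p) y j"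
    by (simp add: exec_append w_def y_def)
  have rhs: "vecmat (2*M) u (kron2 G) j = vecmat M (\<lambda>a. w (2*a + j mod 2)) G (j div 2)"
    unfolding w_def by (rule kron_step[OF j])
  show "exec (polar M @ map (map_op (\<lambda>a. 2*a+1)) p @ map (map_op (\<lambda>a. 2*a)) p) u j = vecmat (2*M) u (kron2 G) j"
  proof (cases "even j")
    case True
    then have jj: "j = 2 * (j div 2)" and jm: "j mod 2 = 0" by auto
    have "exec (map (map_op (\<lambda>a. 2*a)) p) y j = exec p (y \<circ> (\<lambda>a. 2*a)) (j div 2)"
      using exec_relabel1[OF inj_f0, of p y "j div 2"] jj by simp
    also have "y \<circ> (\<lambda>a. 2*a) = (\<lambda>a. w (2*a + j mod 2))"
    proof
      fix a
      have "2*a \<notin> range (\<lambda>a::nat. 2*a+1)" by (auto, presburger)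
      then show "(y \<circ> (\<lambda>a. 2*a)) a = w (2*a + j mod 2)"
        using exec_relabel2[OF inj_f1] jm by (simp add: y_def)
    qed
    finally show ?thesis using lhs rhs assms c unfolding computes_def by simp
  next
    case False
    then have jj: "j = 2 * (j div 2) + 1" and jm: "j mod 2 = 1" by presburger+
    have "j \<notin> range (\<lambda>a::nat. 2*a)" using False by auto
    then have "exec (map (map_op (\<lambda>a. 2*a)) p) y j = y j"
      using exec_relabel2[OF inj_f0] by simp
    also have "\<dots> = exec p (w \<circ> (\<lambda>a. 2*a+1)) (j div 2)"
      unfolding y_def using exec_relabel1[OF inj_f1, of p w "j div 2"] jj by simp
    also have "w \<circ> (\<lambda>a. 2*a+1) = (\<lambda>a. w (2*a + j mod 2))"
      using jm by (simp add: comp_def)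
    finally show ?thesis using lhs rhs assms c unfolding computes_def by simp
  qed
qed

lemma inb_append: "inb N (p @ q) \<longleftrightarrow> inb N p \<and> inb N q"
  by (auto simp: inb_def)

lemma inb_polar: "inb (2*M) (polar M)"
  by (auto simp: inb_def polar_def)

lemma op_indices_map: "op_indices (map_op f b) = f ` op_indices b"
  by (cases b) auto

lemma inb_relabel:
  assumes "inb M p" "\<And>a. a < M \<Longrightarrow> f a < N"
  shows "inb N (map (map_op f) p)"
  using assms by (fastforce simp: inb_def op_indices_map)

lemma step:
  assumes "computes M p G" "inb M p" "computes (2*M) q Q" "inb (2*M) q"
  shows "computes (2*M) (q @ (polar M @ map (map_op (\<lambda>a. 2*a+1)) p @ map (map_op (\<lambda>a. 2*a)) p)) (matmul (2*M) Q (kron2 G))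
    \<and> inb (2*M) (q @ (polar M @ map (map_op (\<lambda>a. 2*a+1)) p @ map (map_op (\<lambda>a. 2*a)) p))
    \<and> length (q @ (polar M @ map (map_op (\<lambda>a. 2*a+1)) p @ map (map_op (\<lambda>a. 2*a)) p)) = length q + M + 2 * length p"
proof (intro conjI)
  show "computes (2*M) (q @ (polar M @ map (map_op (\<lambda>a. 2*a+1)) p @ map (map_op (\<lambda>a. 2*a)) p)) (matmul (2*M) Q (kron2 G))"
    by (rule compose[OF assms(3) kron_computes[OF assms(1)]])
  have "inb (2*M) (map (map_op (\<lambda>a. 2*a+1)) p)" "inb (2*M) (map (map_op (\<lambda>a. 2*a)) p)"
    by (rule inb_relabel[OF assms(2)]; simp)+
  then show "inb (2*M) (q @ (polar M @ map (map_op (\<lambda>a. 2*a+1)) p @ map (map_op (\<lambda>a. 2*a)) p))"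
    using assms(4) inb_polar by (simp add: inb_append)
  show "length (q @ (polar M @ map (map_op (\<lambda>a. 2*a+1)) p @ map (map_op (\<lambda>a. 2*a)) p)) = length q + M + 2 * length p"
    by (simp add: polar_def)
qed


lemma Q_computes:
  assumes "valid_sets N IS IA"
  shows "computes N (map (\<lambda>i. Swap (i-1) i) (sorted_list_of_set IS) @ map (\<lambda>i. Xor (i-1) i) (sorted_list_of_set IA)) (Qmat N IS IA)
    \<and> inb N (map (\<lambda>i. Swap (i-1) i) (sorted_list_of_set IS) @ map (\<lambda>i. Xor (i-1) i) (sorted_list_of_set IA))
    \<and> length (map (\<lambda>i. Swap (i-1) i) (sorted_list_of_set IS) @ map (\<lambda>i. Xor (i-1) i) (sorted_list_of_set IA)) \<le> 2 * N"
proof -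
  have sub: "IS \<subseteq> {1..N-1}" "IA \<subseteq> {1..N-1}" using assms by (auto simp: valid_sets_def)
  then have fin: "finite IS" "finite IA" by (auto intro: finite_subset)
  have bnd: "\<And>i. i \<in> IS \<union> IA \<Longrightarrow> 1 \<le> i \<and> i < N" using sub by fastforce
  have c1: "computes N (map (\<lambda>i. Swap (i-1) i) (sorted_list_of_set IS)) (matprod N (Smat N) IS)"
    using sub fin using bnd by (intro computes_matprod ballI computes_S) auto
  have c2: "computes N (map (\<lambda>i. Xor (i-1) i) (sorted_list_of_set IA)) (matprod N (Amat N) IA)"
    using sub fin using bnd by (intro computes_matprod ballI computes_A) auto
  have i: "inb N (map (\<lambda>i. Swap (i-1) i) (sorted_list_of_set IS) @ map (\<lambda>i. Xor (i-1) i) (sorted_list_of_set IA))"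
    using sub fin by (fastforce simp: inb_def)
  have "card IS \<le> card {1..N-1}" by (rule card_mono[OF _ sub(1)]) simp
  moreover have "card IA \<le> card {1..N-1}" by (rule card_mono[OF _ sub(2)]) simp
  ultimately
  have "length (map (\<lambda>i. Swap (i-1) i) (sorted_list_of_set IS) @ map (\<lambda>i. Xor (i-1) i) (sorted_list_of_set IA)) \<le> 2 * N"
    by simp
  then show ?thesis using compose[OF c1 c2] i unfolding Qmat_def by simp
qed

lemma main:
  fixes IS IA :: "nat \<Rightarrow> nat set"
  shows "(\<forall>k'. 2 \<le> k' \<and> k' \<le> k \<longrightarrow> valid_sets (2^k') (IS (2^k')) (IA (2^k'))) \<Longrightarrow>
   \<exists>p. length p \<le> 3*2^k*k \<and> inb (2^k) p \<and> computes (2^k) p (absG IS IA k)"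
proof (induction k)
  case 0
  show ?case by (intro exI[of _ "[]"]) (simp add: inb_def computes_id)
next
  case (Suc k)
  have "\<forall>k'. 2 \<le> k' \<and> k' \<le> k \<longrightarrow> valid_sets (2^k') (IS (2^k')) (IA (2^k'))"
    using Suc.prems le_SucI by blast
  from Suc.IH[OF this] obtain p where p: "length p \<le> 3*2^k*k" "inb (2^k) p" "computes (2^k) p (absG IS IA k)"
    by blast
  define M :: nat where "M = 2^k"
  have N: "(2::nat)^Suc k = 2*M" by (simp add: M_def)
  have p': "length p \<le> 3*M*k" "inb M p" "computes M p (absG IS IA k)" using p by (simp_all only: M_def)
  define r where "r = polar M @ map (map_op (\<lambda>a. 2*a+1)) p @ map (map_op (\<lambda>a. 2*a)) p"
  show ?case
  proof (cases "k = 0")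
    case True
    have q: "computes (2*M) [] idmat" "inb (2*M) []" by (auto simp: computes_id inb_def)
    have G: "absG IS IA (Suc k) = matmul (2*M) idmat (kron2 (absG IS IA k))"
      using True by (simp add: M_def)
    have S: "computes (2*M) ([] @ r) (absG IS IA (Suc k)) \<and> inb (2*M) ([] @ r) \<and> length ([] @ r) = length ([]::bitop list) + M + 2 * length p"
      using step[OF p'(3,2) q] unfolding G r_def by blast
    have "length ([] @ r) \<le> 3*(2*M)*Suc k" using S p'(1) True by (simp add: M_def)
    then show ?thesis unfolding N using S by blast
  next
    case False
    have v0: "valid_sets (2^Suc k) (IS (2^Suc k)) (IA (2^Suc k))"
      using Suc.prems[rule_format, of "Suc k"] False by simp
    then have v: "valid_sets (2*M) (IS (2*M)) (IA (2*M))" by (simp only: N)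
    obtain q where q: "computes (2*M) q (Qmat (2*M) (IS (2*M)) (IA (2*M)))" "inb (2*M) q" "length q \<le> 2*(2*M)"
      using Q_computes[OF v] by blast
    have G: "absG IS IA (Suc k) = matmul (2*M) (Qmat (2*M) (IS (2*M)) (IA (2*M))) (kron2 (absG IS IA k))"
      using False by (simp only: absG.simps N if_False)
    have S: "computes (2*M) (q @ r) (absG IS IA (Suc k)) \<and> inb (2*M) (q @ r) \<and> length (q @ r) = length q + M + 2 * length p"
      using step[OF p'(3,2) q(1,2)] unfolding G r_def by blast
    have "length q + M + 2 * length p \<le> 4*M + M + 2*(3*M*k)" using q(3) p'(1) by simp
    also have "\<dots> \<le> 3*(2*M)*Suc k" by simp
    finally have "length (q @ r) \<le> 3*(2*M)*Suc k" using S by simp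
    then show ?thesis unfolding N using S by blast
  qed
qed

theorem proposition1:
  "\<exists>C::nat. \<forall>m::nat. \<forall>IS IA :: nat \<Rightarrow> nat set.
     m \<ge> 1 \<longrightarrow>
     (\<forall>k. 2 \<le> k \<and> k \<le> m \<longrightarrow> valid_sets (2^k) (IS (2^k)) (IA (2^k))) \<longrightarrow>
     (\<exists>prog. length prog \<le> C * 2^m * m \<and>
        (\<forall>op \<in> set prog. op_indices op \<subseteq> {..<2^m}) \<and>
        (\<forall>u j. j < 2^m \<longrightarrow> exec prog u j = vecmat (2^m) u (absG IS IA m) j))"
proof (intro exI[of _ 3] allI impI)
  fix m :: nat and IS IA :: "nat \<Rightarrow> nat set"
  assume "(\<forall>k. 2 \<le> k \<and> k \<le> m \<longrightarrow> valid_sets (2^k) (IS (2^k)) (IA (2^k)))"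
  then show "\<exists>prog. length prog \<le> 3 * 2^m * m \<and>
        (\<forall>op \<in> set prog. op_indices op \<subseteq> {..<2^m}) \<and>
        (\<forall>u j. j < 2^m \<longrightarrow> exec prog u j = vecmat (2^m) u (absG IS IA m) j)"
    using main[of m IS IA] unfolding inb_def computes_def by blast
qed

end
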